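(* Let $\mathcal{G}_s$ be a connected signed graph on nodes $\{1,\dots,n\}$ with symmetric real weight matrix $W$, signed adjacency matrix $A_s$, signed degree matrix $D_s=\mathrm{diag}\big(\sum_j|[A_s]_{ij}|\big)$ and signed Laplacian $L_s=D_s-A_s$. Take node $n$ as the single input node and partition $$L_s=\begin{bmatrix}A_s^f & B_s^f\\ (B_s^f)^T & a_s\end{bmatrix},\qquad A_s^f\in\mathbb{R}^{(n-1)\times(n-1)},\ B_s^f\in\mathbb{R}^{n-1},$$ and consider the leader-follower signed consensus system $\dot x=-A_s^fx-B_s^fu$ with scalar input $u$. Suppose $\mathcal{G}_s$ is structurally balanced, i.e. there is $G_t=\mathrm{diag}(\sigma_1,\dots,\sigma_n)$, $\sigma_i\in\{\pm1\}$, with $G_tA_sG_t$ entrywise nonnegative, and suppose it is input symmetric: for the unsigned Laplacian $L=G_tL_sG_t$ there is a permutation matrix $\Pi\neq I$ with $\Pi L=L\Pi$ and $\Pi e_n=e_n$. Then the system $\dot x=-A_s^fx-B_s^fu$ is uncontrollable.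
   Context: $L=G_tL_sG_t$ is the Laplacian of the underlying unsigned graph with edge weights $|W_{ij}|$; a permutation matrix commuting with it corresponds to a weight-preserving graph automorphism, here required to fix the input node $n$ and be nontrivial. *)

theory Defs
  imports "Jordan_Normal_Form.DL_Rank"
begin

text \<open>Nodes are indexed 0,...,n-1 (node k of the paper is index k-1);
the input node n of the paper is index n-1.  Matrices are JNF matrices.\<close>

definition signed_adj :: "real mat \<Rightarrow> real mat" where
  "signed_adj W = W"

definition signed_deg :: "real mat \<Rightarrow> real mat" where
  "signed_deg A = mat (dim_row A) (dim_row A)
     (\<lambda>(i,j). if i = j then (\<Sum>k<dim_col A. \<bar>A $$ (i,k)\<bar>) else 0)"

definition signed_laplacian :: "real mat \<Rightarrow> real mat" where
  "signed_laplacian W = signed_deg (signed_adj W) - signed_adj W"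

text \<open>Signed graph on n nodes given by a symmetric weight matrix without self-loops;
edge {i,j} present iff W_ij \<noteq> 0.\<close>
definition signed_graph :: "nat \<Rightarrow> real mat \<Rightarrow> bool" where
  "signed_graph n W \<longleftrightarrow> W \<in> carrier_mat n n \<and> transpose_mat W = W \<and>
     (\<forall>i<n. W $$ (i,i) = 0)"

definition connected_graph :: "nat \<Rightarrow> real mat \<Rightarrow> bool" where
  "connected_graph n W \<longleftrightarrow>
     (\<forall>i<n. \<forall>j<n. (\<lambda>a b. a < n \<and> b < n \<and> W $$ (a,b) \<noteq> 0)\<^sup>*\<^sup>* i j)"

definition gauge_mat :: "nat \<Rightarrow> (nat \<Rightarrow> real) \<Rightarrow> real mat" where
  "gauge_mat n \<sigma> = mat n n (\<lambda>(i,j). if i = j then \<sigma> i else 0)"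

definition perm_mat :: "nat \<Rightarrow> (nat \<Rightarrow> nat) \<Rightarrow> real mat" where
  "perm_mat n p = mat n n (\<lambda>(i,j). if i = p j then 1 else 0)"

definition is_perm_mat :: "nat \<Rightarrow> real mat \<Rightarrow> bool" where
  "is_perm_mat n P \<longleftrightarrow> (\<exists>p. p permutes {..<n} \<and> P = perm_mat n p)"

text \<open>Partition of L_s with the last node as input: A_s^f and B_s^f.\<close>
definition follower_block :: "nat \<Rightarrow> real mat \<Rightarrow> real mat" where
  "follower_block n L = mat (n-1) (n-1) (\<lambda>(i,j). L $$ (i,j))"

definition input_block :: "nat \<Rightarrow> real mat \<Rightarrow> real mat" where
  "input_block n L = mat (n-1) 1 (\<lambda>(i,_). L $$ (i, n-1))"

text \<open>Kalman controllability matrix [B, AB, ..., A^(m-1) B] for A m x m, B m x p.\<close>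
definition ctrb_mat :: "real mat \<Rightarrow> real mat \<Rightarrow> real mat" where
  "ctrb_mat A B = mat (dim_row A) (dim_row A * dim_col B)
     (\<lambda>(i,c). ((A ^\<^sub>m (c div dim_col B)) * B) $$ (i, c mod dim_col B))"

definition controllable :: "real mat \<Rightarrow> real mat \<Rightarrow> bool" where
  "controllable A B \<longleftrightarrow> vec_space.rank (dim_row A) (ctrb_mat A B) = dim_row A"

end

theory Submission
  imports Defs
begin

lemma gauge_conj:
  assumes Ls: "Ls \<in> carrier_mat n n" and i: "i < n" and j: "j < n"
  shows "(gauge_mat n \<sigma> * Ls * gauge_mat n \<sigma>) $$ (i,j) = \<sigma> i * Ls $$ (i,j) * \<sigma> j"
proof -
  have G: "gauge_mat n \<sigma> \<in> carrier_mat n n" by (simp add: gauge_mat_def)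
  have 1: "(gauge_mat n \<sigma> * Ls) $$ (i,k) = \<sigma> i * Ls $$ (i,k)" if k: "k < n" for k
  proof -
    have "(gauge_mat n \<sigma> * Ls) $$ (i,k) = (\<Sum>l<n. (if i = l then \<sigma> i else 0) * Ls $$ (l,k))"
      using Ls i k by (simp add: gauge_mat_def scalar_prod_def lessThan_atLeast0)
    also have "\<dots> = (\<Sum>l<n. (if l = i then \<sigma> i * Ls $$ (i,k) else 0))"
      by (rule sum.cong) auto
    also have "\<dots> = \<sigma> i * Ls $$ (i,k)"
      using i by simp
    finally show ?thesis .
  qed
  have "(gauge_mat n \<sigma> * Ls * gauge_mat n \<sigma>) $$ (i,j)
      = (\<Sum>k<n. (gauge_mat n \<sigma> * Ls) $$ (i,k) * (if k = j then \<sigma> k else 0))"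
    using Ls i j by (simp add: gauge_mat_def scalar_prod_def lessThan_atLeast0)
  also have "\<dots> = (\<Sum>k<n. (if k = j then (gauge_mat n \<sigma> * Ls) $$ (i,k) * \<sigma> j else 0))"
    by (rule sum.cong) auto
  also have "\<dots> = (gauge_mat n \<sigma> * Ls) $$ (i,j) * \<sigma> j" using j by simp
  finally show ?thesis using 1[OF j] by simp
qed

lemma perm_left:
  assumes p: "p permutes {..<n}" and X: "X \<in> carrier_mat n n" and i: "i < n" and j: "j < n"
  shows "(perm_mat n p * X) $$ (i,j) = X $$ (Hilbert_Choice.inv p i, j)"
proof -
  have eqp: "(i = p k) = (k = Hilbert_Choice.inv p i)" for k using permutes_inv_eq[OF p] by metis
  have "(perm_mat n p * X) $$ (i,j) = (\<Sum>k<n. (if i = p k then 1 else 0) * X $$ (k,j))"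
    using X i j by (simp add: perm_mat_def scalar_prod_def lessThan_atLeast0)
  also have "\<dots> = (\<Sum>k<n. (if k = Hilbert_Choice.inv p i then X $$ (k,j) else 0))"
    by (rule sum.cong) (auto simp: eqp)
  also have "\<dots> = X $$ (Hilbert_Choice.inv p i, j)"
    using permutes_in_image[OF permutes_inv[OF p]] i by simp
  finally show ?thesis .
qed

lemma perm_right:
  assumes p: "p permutes {..<n}" and X: "X \<in> carrier_mat n n" and i: "i < n" and j: "j < n"
  shows "(X * perm_mat n p) $$ (i,j) = X $$ (i, p j)"
proof -
  have "(X * perm_mat n p) $$ (i,j) = (\<Sum>k<n. X $$ (i,k) * (if k = p j then 1 else 0))"
    using X i j by (simp add: perm_mat_def scalar_prod_def lessThan_atLeast0)
  also have "\<dots> = (\<Sum>k<n. (if k = p j then X $$ (i,k) else 0))"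
    by (rule sum.cong) auto
  also have "\<dots> = X $$ (i, p j)"
    using permutes_in_image[OF p] j by simp
  finally show ?thesis .
qed

lemma perm_vec:
  assumes p: "p permutes {..<n}" and v: "v \<in> carrier_vec n" and i: "i < n"
  shows "(perm_mat n p *\<^sub>v v) $ i = v $ (Hilbert_Choice.inv p i)"
proof -
  have eqp: "(i = p k) = (k = Hilbert_Choice.inv p i)" for k using permutes_inv_eq[OF p] by metis
  have "(perm_mat n p *\<^sub>v v) $ i = (\<Sum>k<n. (if i = p k then 1 else 0) * v $ k)"
    using v i by (simp add: perm_mat_def scalar_prod_def lessThan_atLeast0)
  also have "\<dots> = (\<Sum>k<n. (if k = Hilbert_Choice.inv p i then v $ k else 0))"
    by (rule sum.cong) (auto simp: eqp)
  also have "\<dots> = v $ (Hilbert_Choice.inv p i)"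
    using permutes_in_image[OF permutes_inv[OF p]] i by simp
  finally show ?thesis .
qed

theorem theorem4:
  fixes n :: nat and W :: "real mat"
  assumes graph: "signed_graph n W"
    and conn: "connected_graph n W"
    and balanced_symmetric:
      "\<exists>\<sigma>. (\<forall>i<n. \<sigma> i = 1 \<or> \<sigma> i = -1)
          \<and> (\<forall>i<n. \<forall>j<n.
               (gauge_mat n \<sigma> * signed_adj W * gauge_mat n \<sigma>) $$ (i,j) \<ge> 0)
          \<and> (\<exists>Pm. is_perm_mat n Pm \<and> Pm \<noteq> 1\<^sub>m n
                 \<and> Pm * (gauge_mat n \<sigma> * signed_laplacian W * gauge_mat n \<sigma>)
                   = (gauge_mat n \<sigma> * signed_laplacian W * gauge_mat n \<sigma>) * Pm
                 \<and> Pm *\<^sub>v unit_vec n (n - 1) = unit_vec n (n - 1))"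
  shows "\<not> controllable (- follower_block n (signed_laplacian W))
                         (- input_block n (signed_laplacian W))"
proof
  assume ctrl: "controllable (- follower_block n (signed_laplacian W))
                         (- input_block n (signed_laplacian W))"
  obtain \<sigma> Pm where sig: "\<forall>i<n. \<sigma> i = 1 \<or> \<sigma> i = -1"
    and Pm: "is_perm_mat n Pm" "Pm \<noteq> 1\<^sub>m n"
    and comm: "Pm * (gauge_mat n \<sigma> * signed_laplacian W * gauge_mat n \<sigma>)
                   = (gauge_mat n \<sigma> * signed_laplacian W * gauge_mat n \<sigma>) * Pm"
    and fixu: "Pm *\<^sub>v unit_vec n (n - 1) = unit_vec n (n - 1)"
    using balanced_symmetric by blast
  obtain p where p: "p permutes {..<n}" and Pmd: "Pm = perm_mat n p"
    using Pm(1) unfolding is_perm_mat_def by blast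
  define Ls where "Ls = signed_laplacian W"
  have Wc: "W \<in> carrier_mat n n" using graph unfolding signed_graph_def by blast
  have Lsc: "Ls \<in> carrier_mat n n"
    using Wc unfolding Ls_def signed_laplacian_def signed_deg_def signed_adj_def by auto
  have sq: "\<sigma> i * \<sigma> i = 1" if "i < n" for i using sig that by force
  define L where "L = gauge_mat n \<sigma> * Ls * gauge_mat n \<sigma>"
  have Gc: "gauge_mat n \<sigma> \<in> carrier_mat n n" by (simp add: gauge_mat_def)
  have Lc: "L \<in> carrier_mat n n" unfolding L_def using Lsc Gc by (meson mult_carrier_mat)
  have Le: "L $$ (i,j) = \<sigma> i * Ls $$ (i,j) * \<sigma> j" if "i < n" "j < n" for i j
    unfolding L_def using gauge_conj[OF Lsc that] .
  have comm': "perm_mat n p * L = L * perm_mat n p" using comm Pmd unfolding L_def Ls_def by simp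
  have Lp: "L $$ (p i, p j) = L $$ (i, j)" if "i < n" "j < n" for i j
  proof -
    have pi: "p i < n" using permutes_in_image[OF p] that by simp
    have "(perm_mat n p * L) $$ (p i, j) = (L * perm_mat n p) $$ (p i, j)" using comm' by simp
    then show ?thesis using perm_left[OF p Lc pi that(2)] perm_right[OF p Lc pi that(2)]
        permutes_inverses(2)[OF p] by simp
  qed
  have n0: "n \<noteq> 0"
  proof
    assume "n = 0"
    then have "Pm = 1\<^sub>m n" using Pmd by (auto simp: perm_mat_def)
    then show False using Pm(2) by simp
  qed
  define m where "m = n - 1"
  have nm: "n = Suc m" using n0 unfolding m_def by simp
  have pfix: "p m = m"
  proof -
    have "(perm_mat n p *\<^sub>v unit_vec n m) $ m = unit_vec n m $ m"
      using fixu Pmd unfolding m_def by simp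
    then have "(unit_vec n m :: real vec) $ (Hilbert_Choice.inv p m) = 1" using perm_vec[OF p, of "unit_vec n m" m] nm by simp
    moreover have "Hilbert_Choice.inv p m < n" using permutes_in_image[OF permutes_inv[OF p]] nm by simp
    ultimately have "Hilbert_Choice.inv p m = m" using nm by (simp split: if_splits)
    then show ?thesis using p by (metis permutes_inverses(1))
  qed
  have pm: "p permutes {..<m}"
    by (rule permutes_superset[OF p]) (auto simp: nm pfix)
  obtain i0 where i0: "i0 < n" "p i0 \<noteq> i0"
  proof -
    have "\<exists>i<n. p i \<noteq> i"
    proof (rule ccontr)
      assume "\<not> ?thesis"
      then have "perm_mat n p = 1\<^sub>m n" by (intro eq_matI) (auto simp: perm_mat_def)
      then show False using Pm(2) Pmd by simp
    qed
    then show ?thesis using that by blast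
  qed
  have i0m: "i0 < m" using i0 pfix nm by (metis less_antisym)
  have pi0m: "p i0 < m" using permutes_in_image[OF pm] i0m by simp
  have pim: "p i < m" if "i < m" for i using permutes_in_image[OF pm] that by simp
  define A where "A = - follower_block n Ls"
  define B where "B = - input_block n Ls"
  have Ac: "A \<in> carrier_mat m m" unfolding A_def follower_block_def m_def by simp
  have Bc: "B \<in> carrier_mat m 1" unfolding B_def input_block_def m_def by simp
  have Ae: "A $$ (i,j) = - Ls $$ (i,j)" if "i < m" "j < m" for i j
    using that unfolding A_def follower_block_def m_def by simp
  have Be: "B $$ (i,0) = - Ls $$ (i,m)" if "i < m" for i
    using that unfolding B_def input_block_def m_def by simp
  define Inv where "Inv v \<longleftrightarrow> (\<forall>i<m. \<sigma> (p i) * v $$ (p i, 0) = \<sigma> i * v $$ (i, 0))" for v :: "real mat"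
  have step: "Inv (A * v)" if v: "v \<in> carrier_mat m 1" "Inv v" for v
    unfolding Inv_def
  proof (intro allI impI)
    fix i assume i: "i < m"
    have "\<sigma> (p i) * (A * v) $$ (p i, 0) = - (\<Sum>j<m. \<sigma> (p i) * Ls $$ (p i, j) * v $$ (j,0))"
      using Ac v pim[OF i] Ae[OF pim[OF i]]
      by (simp add: scalar_prod_def lessThan_atLeast0 sum_distrib_left sum_negf algebra_simps)
    also have "(\<Sum>j<m. \<sigma> (p i) * Ls $$ (p i, j) * v $$ (j,0))
        = (\<Sum>j<m. \<sigma> (p i) * Ls $$ (p i, p j) * v $$ (p j,0))"
      using sum.reindex_bij_betw[OF permutes_imp_bij[OF pm],
          of "\<lambda>j. \<sigma> (p i) * Ls $$ (p i, j) * v $$ (j,0)"] by simp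
    also have "\<dots> = (\<Sum>j<m. \<sigma> i * Ls $$ (i, j) * v $$ (j,0))"
    proof (rule sum.cong)
      fix j assume "j \<in> {..<m}"
      then have j: "j < m" by simp
      have jn: "j < n" "i < n" "p j < n" "p i < n" using j i pim[OF j] pim[OF i] nm by auto
      have e1: "\<sigma> (p i) * Ls $$ (p i, p j) * \<sigma> (p j) = \<sigma> i * Ls $$ (i, j) * \<sigma> j"
        using Lp[OF jn(2) jn(1)] Le jn by simp
      have e2: "\<sigma> (p j) * v $$ (p j, 0) = \<sigma> j * v $$ (j, 0)" using v(2) j unfolding Inv_def by simp
      have "\<sigma> (p i) * Ls $$ (p i, p j) * v $$ (p j,0)
          = (\<sigma> (p i) * Ls $$ (p i, p j) * \<sigma> (p j)) * (\<sigma> (p j) * v $$ (p j,0))"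
        using sq[OF jn(3)] by (simp add: algebra_simps)
      also have "\<dots> = (\<sigma> i * Ls $$ (i, j) * \<sigma> j) * (\<sigma> j * v $$ (j, 0))" using e1 e2 by simp
      also have "\<dots> = \<sigma> i * Ls $$ (i, j) * v $$ (j,0)"
        using sq[OF jn(1)] by (simp add: algebra_simps)
      finally show "\<sigma> (p i) * Ls $$ (p i, p j) * v $$ (p j,0) = \<sigma> i * Ls $$ (i, j) * v $$ (j,0)" .
    qed simp
    also have "- (\<Sum>j<m. \<sigma> i * Ls $$ (i, j) * v $$ (j,0)) = \<sigma> i * (A * v) $$ (i, 0)"
      using Ac v i Ae[OF i]
      by (simp add: scalar_prod_def lessThan_atLeast0 sum_distrib_left sum_negf algebra_simps)
    finally show "\<sigma> (p i) * (A * v) $$ (p i, 0) = \<sigma> i * (A * v) $$ (i, 0)" .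
  qed
  have base: "Inv B" unfolding Inv_def
  proof (intro allI impI)
    fix i assume i: "i < m"
    have jn: "i < n" "m < n" using i nm by auto
    have "\<sigma> (p i) * Ls $$ (p i, m) * \<sigma> m = \<sigma> i * Ls $$ (i, m) * \<sigma> m"
      using Lp[OF jn] pfix Le jn permutes_in_image[OF p] by auto
    then have "\<sigma> (p i) * Ls $$ (p i, m) = \<sigma> i * Ls $$ (i, m)"
      using sq[OF jn(2)] by (metis mult_cancel_right zero_neq_one mult_zero_left)
    then show "\<sigma> (p i) * B $$ (p i, 0) = \<sigma> i * B $$ (i, 0)"
      using Be[OF i] Be[OF pim[OF i]] by simp
  qed
  have powinv: "\<forall>v. v \<in> carrier_mat m 1 \<longrightarrow> Inv v \<longrightarrow> Inv (A ^\<^sub>m k * v)" for k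
  proof (induction k)
    case 0
    then show ?case using Ac by (auto simp: Inv_def)
  next
    case (Suc k)
    show ?case
    proof (intro allI impI)
      fix v :: "real mat" assume v: "v \<in> carrier_mat m 1" "Inv v"
      have "A ^\<^sub>m Suc k * v = A ^\<^sub>m k * (A * v)"
        using Ac v by (simp add: assoc_mult_mat[of _ m m _ m _ 1])
      moreover have "A * v \<in> carrier_mat m 1" using Ac v by simp
      ultimately show "Inv (A ^\<^sub>m Suc k * v)" using Suc step[OF v] by simp
    qed
  qed
  define C where "C = ctrb_mat A B"
  have Cc: "C \<in> carrier_mat m m" using Ac Bc unfolding C_def ctrb_mat_def by auto
  have Ce: "C $$ (i,c) = (A ^\<^sub>m c * B) $$ (i, 0)" if "i < m" "c < m" for i c
    using that Ac Bc unfolding C_def ctrb_mat_def by auto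
  define w where "w = vec m (\<lambda>i. (if i = i0 then \<sigma> i0 else 0) - (if i = p i0 then \<sigma> (p i0) else 0))"
  have wc: "w \<in> carrier_vec m" unfolding w_def by simp
  have wne: "w \<noteq> 0\<^sub>v m"
  proof
    assume "w = 0\<^sub>v m"
    then have "w $ i0 = 0" using i0m by simp
    then show False using i0m i0 sq[of i0] unfolding w_def by auto
  qed
  have Cw: "transpose_mat C *\<^sub>v w = 0\<^sub>v m"
  proof (rule eq_vecI)
    fix c assume c: "c < dim_vec (0\<^sub>v m :: real vec)"
    then have c: "c < m" by simp
    define f where "f i = (A ^\<^sub>m c * B) $$ (i, 0)" for i
    have "(transpose_mat C *\<^sub>v w) $ c = (\<Sum>i<m. C $$ (i,c) * w $ i)"
      using Cc wc c by (simp add: scalar_prod_def lessThan_atLeast0 mult.commute)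
    also have "\<dots> = (\<Sum>i<m. (if i = i0 then f i * \<sigma> i0 else 0) - (if i = p i0 then f i * \<sigma> (p i0) else 0))"
      by (rule sum.cong) (auto simp: Ce c f_def w_def)
    also have "\<dots> = f i0 * \<sigma> i0 - f (p i0) * \<sigma> (p i0)"
      using i0m pi0m by (simp add: sum_subtractf)
    also have "\<dots> = 0"
      using powinv[of c] Bc base i0m unfolding Inv_def f_def by (auto simp: mult.commute)
    finally show "(transpose_mat C *\<^sub>v w) $ c = 0\<^sub>v m $ c" using c by simp
  qed (use Cc in auto)
  have "det (transpose_mat C) = 0"
    using det_0_iff_vec_prod_zero_field[of "transpose_mat C" m] Cc wc wne Cw by auto
  then have "det C = 0" using det_transpose[OF Cc] by simp
  then have "vec_space.rank m C < m" using vec_space.det_zero_low_rank[OF Cc] by blast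
  moreover have "vec_space.rank m C = m"
    using ctrl Ac unfolding controllable_def C_def A_def B_def Ls_def by simp
  ultimately show False by simp
qed

end
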